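(* Assume the standing setup, let $H\le\Gamma$ and let $\mathcal G_H(P)$ be as defined in the context, for an object $P$ of $\mathcal L$. Regard $\Gamma/H$ as a discrete category (objects the left cosets, only identity morphisms). Then the functor $\delta_P:\mathcal G_H(P)\to\Gamma/H$ sending $(P^\alpha,\alpha)$ to $\widehat\Theta(\alpha)^{-1}H$ is well defined and is an equivalence of categories.
   Context: Standing setup: $(S,\mathcal F,\mathcal L)$ is a $p$-local finite group with centric linking system $\mathcal L$ (objects the $\mathcal F$-centric subgroups, projection $\pi:\mathcal L\to\mathcal F$), and a fixed compatible set of inclusions $\iota_P^Q$ ($\pi(\iota_P^Q)$ the inclusion, $\iota_Q^R\iota_P^Q=\iota_P^R$, $\iota_S^S=\mathrm{Id}$) with respect to which morphisms are restricted. For $\alpha\in\operatorname{Mor}_{\mathcal L}(P,S)$, $P^\alpha=\pi(\alpha)(P)$ and $\alpha$ also denotes the restricted isomorphism $P\to P^\alpha$. $\Gamma=\Gamma_{p'}(\mathcal F)$ (finite, order prime to $p$, a quotient of $\pi_1(|\mathcal L|,S)$) and $\widehat\Theta:\mathcal L\to\mathcal B(\Gamma)$ sends $f:P\to Q$ to the image of the class of the loop $\iota_Q^S*f*(\iota_P^S)^{-1}$; its restriction $\operatorname{Aut}_{\mathcal L}(S)\to\Gamma$ is surjective. $\mathcal L_H$ is the subcategory of $\mathcal L$ with all objects and morphisms $\widehat\Theta^{-1}(H)$, $\iota:\mathcal L_H\to\mathcal L$ the inclusion. $P\downarrow\iota$ has objects $(Q,\alpha)$, $\alpha\in\operatorname{Mor}_{\mathcal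 L}(P,Q)$, and morphisms $(Q,\alpha)\to(Q',\alpha')$ the $\psi\in\operatorname{Mor}_{\mathcal L_H}(Q,Q')$ with $\psi\alpha=\alpha'$; $\mathcal G_H(P)$ is its full subcategory on the objects $(P^\alpha,\alpha)$, $\alpha\in\operatorname{Mor}_{\mathcal L}(P,S)$. *)

theory Defs
  imports "HOL-Algebra.Algebra"
begin

record ('o, 'm) cat =
  ob  :: "'o set"
  ar  :: "'m set"
  sc  :: "'m \<Rightarrow> 'o"
  tg  :: "'m \<Rightarrow> 'o"
  cmp :: "'m \<Rightarrow> 'm \<Rightarrow> 'm"   (* cmp C g f = g o f *)
  idt :: "'o \<Rightarrow> 'm"

definition homs :: "('o, 'm) cat \<Rightarrow> 'o \<Rightarrow> 'o \<Rightarrow> 'm set" where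
  "homs C U V = {f \<in> ar C. sc C f = U \<and> tg C f = V}"

definition is_category :: "('o, 'm) cat \<Rightarrow> bool" where
  "is_category C \<longleftrightarrow>
     (\<forall>f\<in>ar C. sc C f \<in> ob C \<and> tg C f \<in> ob C) \<and>
     (\<forall>U\<in>ob C. idt C U \<in> homs C U U) \<and>
     (\<forall>U V T f g. f \<in> homs C U V \<longrightarrow> g \<in> homs C V T \<longrightarrow> cmp C g f \<in> homs C U T) \<and>
     (\<forall>R U V T f g h. f \<in> homs C R U \<longrightarrow> g \<in> homs C U V \<longrightarrow> h \<in> homs C V T \<longrightarrow>
        cmp C h (cmp C g f) = cmp C (cmp C h g) f) \<and>
     (\<forall>U V f. f \<in> homs C U V \<longrightarrow> cmp C (idt C V) f = f \<and> cmp C f (idt C U) = f)"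

definition is_functor :: "('o, 'm) cat \<Rightarrow> ('p, 'n) cat \<Rightarrow> ('o \<Rightarrow> 'p) \<Rightarrow> ('m \<Rightarrow> 'n) \<Rightarrow> bool" where
  "is_functor C D F0 F1 \<longleftrightarrow>
     (\<forall>U\<in>ob C. F0 U \<in> ob D) \<and>
     (\<forall>U V f. f \<in> homs C U V \<longrightarrow> F1 f \<in> homs D (F0 U) (F0 V)) \<and>
     (\<forall>U V T f g. f \<in> homs C U V \<longrightarrow> g \<in> homs C V T \<longrightarrow>
        F1 (cmp C g f) = cmp D (F1 g) (F1 f)) \<and>
     (\<forall>U\<in>ob C. F1 (idt C U) = idt D (F0 U))"

definition is_iso :: "('o, 'm) cat \<Rightarrow> 'm \<Rightarrow> bool" where
  "is_iso C f \<longleftrightarrow> f \<in> ar C \<and>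
     (\<exists>g\<in>homs C (tg C f) (sc C f). cmp C g f = idt C (sc C f) \<and> cmp C f g = idt C (tg C f))"

definition fully_faithful :: "('o, 'm) cat \<Rightarrow> ('p, 'n) cat \<Rightarrow> ('o \<Rightarrow> 'p) \<Rightarrow> ('m \<Rightarrow> 'n) \<Rightarrow> bool" where
  "fully_faithful C D F0 F1 \<longleftrightarrow>
     (\<forall>U\<in>ob C. \<forall>V\<in>ob C. bij_betw F1 (homs C U V) (homs D (F0 U) (F0 V)))"

definition essentially_surjective :: "('o, 'm) cat \<Rightarrow> ('p, 'n) cat \<Rightarrow> ('o \<Rightarrow> 'p) \<Rightarrow> bool" where
  "essentially_surjective C D F0 \<longleftrightarrow>
     (\<forall>V\<in>ob D. \<exists>U\<in>ob C. \<exists>f\<in>homs D (F0 U) V. is_iso D f)"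

text \<open>Equivalence of categories (in HOL with choice: a fully faithful,
  essentially surjective functor between categories).\<close>
definition equivalence_of_categories ::
  "('o, 'm) cat \<Rightarrow> ('p, 'n) cat \<Rightarrow> ('o \<Rightarrow> 'p) \<Rightarrow> ('m \<Rightarrow> 'n) \<Rightarrow> bool" where
  "equivalence_of_categories C D F0 F1 \<longleftrightarrow>
     is_category C \<and> is_category D \<and> is_functor C D F0 F1 \<and>
     fully_faithful C D F0 F1 \<and> essentially_surjective C D F0"

text \<open>Discrete category on a set: arrows are the identities, identified with the objects.\<close>
definition discrete_cat :: "'o set \<Rightarrow> ('o, 'o) cat" where
  "discrete_cat U = \<lparr>ob = U, ar = U, sc = id, tg = id, cmp = (\<lambda>g f. f), idt = id\<rparr>"

definition cj :: "('g, 'b) monoid_scheme \<Rightarrow> 'g \<Rightarrow> 'g \<Rightarrow> 'g" where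
  "cj G g x = g \<otimes>\<^bsub>G\<^esub> x \<otimes>\<^bsub>G\<^esub> inv\<^bsub>G\<^esub> g"

definition Cent :: "('g, 'b) monoid_scheme \<Rightarrow> 'g set \<Rightarrow> 'g set" where
  "Cent G P = {g \<in> carrier G. \<forall>x\<in>P. g \<otimes>\<^bsub>G\<^esub> x = x \<otimes>\<^bsub>G\<^esub> g}"

definition Norm :: "('g, 'b) monoid_scheme \<Rightarrow> 'g set \<Rightarrow> 'g set" where
  "Norm G P = {g \<in> carrier G. cj G g ` P = P}"

text \<open>Homomorphisms P -> Q are represented as functions extensional on P.\<close>
definition HomS :: "('g, 'b) monoid_scheme \<Rightarrow> 'g set \<Rightarrow> 'g set \<Rightarrow> ('g \<Rightarrow> 'g) set" where
  "HomS G P Q = {restrict (cj G g) P | g. g \<in> carrier G \<and> cj G g ` P \<subseteq> Q}"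

definition InjHom :: "('g, 'b) monoid_scheme \<Rightarrow> 'g set \<Rightarrow> 'g set \<Rightarrow> ('g \<Rightarrow> 'g) set" where
  "InjHom G P Q = {\<phi> \<in> extensional P. \<phi> ` P \<subseteq> Q \<and> inj_on \<phi> P \<and>
      (\<forall>x\<in>P. \<forall>y\<in>P. \<phi> (x \<otimes>\<^bsub>G\<^esub> y) = \<phi> x \<otimes>\<^bsub>G\<^esub> \<phi> y)}"

text \<open>A fusion system over S = carrier G: F P Q = Hom_F(P,Q) (empty unless P, Q are subgroups).\<close>
definition fusion_system ::
  "('g, 'b) monoid_scheme \<Rightarrow> ('g set \<Rightarrow> 'g set \<Rightarrow> ('g \<Rightarrow> 'g) set) \<Rightarrow> bool" where
  "fusion_system G F \<longleftrightarrow>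
     (\<forall>P Q. F P Q \<noteq> {} \<longrightarrow> subgroup P G \<and> subgroup Q G) \<and>
     (\<forall>P Q. subgroup P G \<longrightarrow> subgroup Q G \<longrightarrow> HomS G P Q \<subseteq> F P Q \<and> F P Q \<subseteq> InjHom G P Q) \<and>
     (\<forall>P Q R \<phi> \<psi>. \<phi> \<in> F P Q \<longrightarrow> \<psi> \<in> F Q R \<longrightarrow> restrict (\<psi> \<circ> \<phi>) P \<in> F P R) \<and>
     (\<forall>P Q \<phi>. \<phi> \<in> F P Q \<longrightarrow> \<phi> \<in> F P (\<phi> ` P) \<and> restrict (inv_into P \<phi>) (\<phi> ` P) \<in> F (\<phi> ` P) P)"

definition Fconj where
  "Fconj G F P Q \<longleftrightarrow> (\<exists>\<phi>\<in>F P (carrier G). Q = \<phi> ` P)"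

definition fully_centralized where
  "fully_centralized G F P \<longleftrightarrow> (\<forall>Q. Fconj G F P Q \<longrightarrow> card (Cent G Q) \<le> card (Cent G P))"

definition fully_normalized where
  "fully_normalized G F P \<longleftrightarrow> (\<forall>Q. Fconj G F P Q \<longrightarrow> card (Norm G Q) \<le> card (Norm G P))"

text \<open>Aut_S(P) is a Sylow p-subgroup of Aut_F(P).\<close>
definition sylow_aut where
  "sylow_aut p G F P \<longleftrightarrow> (\<exists>k. card (HomS G P P) = p ^ k) \<and>
      \<not> p dvd (card (F P P) div card (HomS G P P))"

definition Nphi where
  "Nphi G P \<phi> = {g \<in> Norm G P. \<exists>h\<in>Norm G (\<phi> ` P).
      \<forall>y\<in>\<phi> ` P. \<phi> (cj G g (inv_into P \<phi> y)) = cj G h y}"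

definition saturated_fusion_system where
  "saturated_fusion_system p G F \<longleftrightarrow> fusion_system G F \<and>
     (\<forall>P. subgroup P G \<longrightarrow> fully_normalized G F P \<longrightarrow>
        fully_centralized G F P \<and> sylow_aut p G F P) \<and>
     (\<forall>P \<phi>. \<phi> \<in> F P (carrier G) \<longrightarrow> fully_centralized G F (\<phi> ` P) \<longrightarrow>
        (\<exists>\<phi>'\<in>F (Nphi G P \<phi>) (carrier G). \<forall>x\<in>P. \<phi>' x = \<phi> x))"

definition F_centric where
  "F_centric G F P \<longleftrightarrow> subgroup P G \<and> (\<forall>Q. Fconj G F P Q \<longrightarrow> Cent G Q \<subseteq> Q)"

text \<open>prj is the projection L -> F on morphisms (identity on objects);
  dl P is the distinguished monomorphism delta_P : P -> Aut_L(P).\<close>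
definition centric_linking_system ::
  "('g, 'b) monoid_scheme \<Rightarrow> ('g set \<Rightarrow> 'g set \<Rightarrow> ('g \<Rightarrow> 'g) set) \<Rightarrow> ('g set, 'm) cat
     \<Rightarrow> ('m \<Rightarrow> 'g \<Rightarrow> 'g) \<Rightarrow> ('g set \<Rightarrow> 'g \<Rightarrow> 'm) \<Rightarrow> bool" where
  "centric_linking_system G F L prj dl \<longleftrightarrow>
     is_category L \<and> ob L = {P. F_centric G F P} \<and>
     (\<forall>f\<in>ar L. prj f \<in> F (sc L f) (tg L f)) \<and>
     (\<forall>P\<in>ob L. prj (idt L P) = restrict id P) \<and>
     (\<forall>P Q R f g. f \<in> homs L P Q \<longrightarrow> g \<in> homs L Q R \<longrightarrow>
        prj (cmp L g f) = restrict (prj g \<circ> prj f) P) \<and>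
     (\<forall>P\<in>ob L. \<forall>x\<in>P. dl P x \<in> homs L P P) \<and>
     (\<forall>P\<in>ob L. \<forall>x\<in>P. \<forall>y\<in>P. dl P (x \<otimes>\<^bsub>G\<^esub> y) = cmp L (dl P x) (dl P y)) \<and>
     (\<forall>P\<in>ob L. inj_on (dl P) P) \<and>
     \<comment> \<open>axiom (A)\<close>
     (\<forall>P\<in>ob L. \<forall>Q\<in>ob L. prj ` homs L P Q = F P Q) \<and>
     (\<forall>P\<in>ob L. \<forall>Q\<in>ob L. \<forall>f\<in>homs L P Q. \<forall>f'\<in>homs L P Q.
        prj f = prj f' \<longleftrightarrow> (\<exists>z\<in>Cent G P \<inter> P. f' = cmp L f (dl P z))) \<and>
     (\<forall>P\<in>ob L. \<forall>Q\<in>ob L. \<forall>f\<in>homs L P Q. \<forall>z\<in>Cent G P \<inter> P.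
        cmp L f (dl P z) = f \<longrightarrow> z = \<one>\<^bsub>G\<^esub>) \<and>
     \<comment> \<open>axiom (B)\<close>
     (\<forall>P\<in>ob L. \<forall>x\<in>P. prj (dl P x) = restrict (cj G x) P) \<and>
     \<comment> \<open>axiom (C)\<close>
     (\<forall>P\<in>ob L. \<forall>Q\<in>ob L. \<forall>f\<in>homs L P Q. \<forall>x\<in>P.
        cmp L f (dl P x) = cmp L (dl Q (prj f x)) f)"

definition p_local_finite_group where
  "p_local_finite_group p G F L prj dl \<longleftrightarrow>
     Factorial_Ring.prime (p::nat) \<and> group G \<and> finite (carrier G) \<and> (\<exists>n. card (carrier G) = p ^ n) \<and>
     saturated_fusion_system p G F \<and> centric_linking_system G F L prj dl"

definition compatible_inclusions where
  "compatible_inclusions G L prj io \<longleftrightarrow>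
     (\<forall>P\<in>ob L. \<forall>Q\<in>ob L. P \<subseteq> Q \<longrightarrow> io P Q \<in> homs L P Q \<and> prj (io P Q) = restrict id P) \<and>
     (\<forall>P\<in>ob L. \<forall>Q\<in>ob L. \<forall>R\<in>ob L. P \<subseteq> Q \<longrightarrow> Q \<subseteq> R \<longrightarrow>
        cmp L (io Q R) (io P Q) = io P R) \<and>
     io (carrier G) (carrier G) = idt L (carrier G)"

text \<open>For alpha : P -> S, P^alpha = prj(alpha)(P), and the restricted isomorphism P -> P^alpha.\<close>
definition upper :: "('g set, 'm) cat \<Rightarrow> ('m \<Rightarrow> 'g \<Rightarrow> 'g) \<Rightarrow> 'm \<Rightarrow> 'g set" where
  "upper L prj \<alpha> = prj \<alpha> ` sc L \<alpha>"

definition restr where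
  "restr G L prj io \<alpha> = (THE \<beta>. \<beta> \<in> homs L (sc L \<alpha>) (upper L prj \<alpha>) \<and>
       cmp L (io (upper L prj \<alpha>) (carrier G)) \<beta> = \<alpha>)"

text \<open>Theta : L -> B(Gamma) induced (via the loop construction
  f |-> [iota_Q^S * f * (iota_P^S)^-1]) by a surjection from pi_1(|L|,S) onto a finite
  p'-group Gamma.  Such maps are exactly the functors L -> B(Gamma) killing all
  iota_P^S; surjectivity is the stated surjectivity on Aut_L(S).\<close>
definition theta_setup where
  "theta_setup p G L io \<Gamma> \<Theta> \<longleftrightarrow>
     group \<Gamma> \<and> finite (carrier \<Gamma>) \<and> coprime (card (carrier \<Gamma>)) (p::nat) \<and>
     (\<forall>f\<in>ar L. \<Theta> f \<in> carrier \<Gamma>) \<and>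
     (\<forall>P Q R f g. f \<in> homs L P Q \<longrightarrow> g \<in> homs L Q R \<longrightarrow>
        \<Theta> (cmp L g f) = \<Theta> g \<otimes>\<^bsub>\<Gamma>\<^esub> \<Theta> f) \<and>
     (\<forall>P\<in>ob L. \<Theta> (idt L P) = \<one>\<^bsub>\<Gamma>\<^esub>) \<and>
     (\<forall>P\<in>ob L. \<Theta> (io P (carrier G)) = \<one>\<^bsub>\<Gamma>\<^esub>) \<and>
     \<Theta> ` homs L (carrier G) (carrier G) = carrier \<Gamma>"

text \<open>Objects: pairs (P^alpha, alpha) with alpha the restricted isomorphism.
  Morphisms: triples (source, target, psi) with psi a morphism of L_H (Theta psi in H)
  and psi o alpha = alpha'.\<close>
definition GH_cat where
  "GH_cat G L prj io \<Theta> H P =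
     (let Obs = {(upper L prj \<alpha>, restr G L prj io \<alpha>) | \<alpha>. \<alpha> \<in> homs L P (carrier G)} in
      \<lparr>ob = Obs,
       ar = {(x, y, \<psi>) | x y \<psi>. x \<in> Obs \<and> y \<in> Obs \<and> \<psi> \<in> homs L (fst x) (fst y) \<and>
                                \<Theta> \<psi> \<in> H \<and> cmp L \<psi> (snd x) = snd y},
       sc = (\<lambda>(x, y, \<psi>). x),
       tg = (\<lambda>(x, y, \<psi>). y),
       cmp = (\<lambda>(y', z, \<psi>') (x, y, \<psi>). (x, z, cmp L \<psi>' \<psi>)),
       idt = (\<lambda>x. (x, x, idt L (fst x)))\<rparr>)"

definition coset_space where
  "coset_space \<Gamma> H = {g <#\<^bsub>\<Gamma>\<^esub> H | g. g \<in> carrier \<Gamma>}"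

definition delta0 where
  "delta0 \<Gamma> \<Theta> H x = inv\<^bsub>\<Gamma>\<^esub> (\<Theta> (snd x)) <#\<^bsub>\<Gamma>\<^esub> H"

definition delta1 where
  "delta1 \<Gamma> \<Theta> H = (\<lambda>(x, y, \<psi>). delta0 \<Gamma> \<Theta> H x)"

end

theory Submission
  imports Defs
begin

lemma lcos_absorb:
  assumes "group \<Gamma>" "subgroup H \<Gamma>" "a \<in> carrier \<Gamma>" "h \<in> H"
  shows "(a \<otimes>\<^bsub>\<Gamma>\<^esub> h) <#\<^bsub>\<Gamma>\<^esub> H = a <#\<^bsub>\<Gamma>\<^esub> H"
proof -
  have "a \<otimes>\<^bsub>\<Gamma>\<^esub> h \<in> a <#\<^bsub>\<Gamma>\<^esub> H" using assms(4) unfolding l_coset_def by blast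
  then show ?thesis using group.l_repr_independence[OF assms(1) _ assms(3) assms(2)] by metis
qed

lemma lcos_eqD:
  assumes "group \<Gamma>" "subgroup H \<Gamma>" "a \<in> carrier \<Gamma>" "b \<in> carrier \<Gamma>"
    and "a <#\<^bsub>\<Gamma>\<^esub> H = b <#\<^bsub>\<Gamma>\<^esub> H"
  shows "inv\<^bsub>\<Gamma>\<^esub> a \<otimes>\<^bsub>\<Gamma>\<^esub> b \<in> H"
proof -
  have "b \<otimes>\<^bsub>\<Gamma>\<^esub> \<one>\<^bsub>\<Gamma>\<^esub> \<in> b <#\<^bsub>\<Gamma>\<^esub> H" using subgroup.one_closed[OF assms(2)]
    unfolding l_coset_def by blast
  then have "b \<in> a <#\<^bsub>\<Gamma>\<^esub> H" using assms(1,4,5) by (simp add: group.is_monoid)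
  then obtain h where h: "h \<in> H" "b = a \<otimes>\<^bsub>\<Gamma>\<^esub> h" unfolding l_coset_def by blast
  have hc: "h \<in> carrier \<Gamma>" using h(1) assms(2) subgroup.mem_carrier by metis
  have "inv\<^bsub>\<Gamma>\<^esub> a \<otimes>\<^bsub>\<Gamma>\<^esub> b = h" using h(2) hc assms(1,3)
    by (simp add: group.inv_solve_left' group.inv_closed monoid.m_closed group.is_monoid
        group.l_inv monoid.m_assoc[symmetric] monoid.l_one)
  then show ?thesis using h(1) by simp
qed


context
  fixes G :: "'g monoid" and F :: "'g set \<Rightarrow> 'g set \<Rightarrow> ('g \<Rightarrow> 'g) set"
    and L :: "('g set, 'm) cat" and prj :: "'m \<Rightarrow> 'g \<Rightarrow> 'g" and dl :: "'g set \<Rightarrow> 'g \<Rightarrow> 'm"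
  assumes cls: "centric_linking_system G F L prj dl"
    and fs: "fusion_system G F" and grp: "group G" and fin: "finite (carrier G)"
begin

lemmas cls' = cls[unfolded centric_linking_system_def]

lemma catL: "is_category L" using cls'[THEN conjunct1] by blast
lemma obL: "ob L = {P. F_centric G F P}" using cls'[THEN conjunct2, THEN conjunct1] by blast
lemma prjF: "f \<in> homs L P Q \<Longrightarrow> prj f \<in> F P Q"
  using cls'[THEN conjunct2, THEN conjunct2, THEN conjunct1] unfolding homs_def by blast
lemma prj_id: "P \<in> ob L \<Longrightarrow> prj (idt L P) = restrict id P"
  using cls'[THEN conjunct2, THEN conjunct2, THEN conjunct2, THEN conjunct1] by blast
lemma prj_cmp: "f \<in> homs L P Q \<Longrightarrow> g \<in> homs L Q R \<Longrightarrow> prj (cmp L g f) = restrict (prj g \<circ> prj f) P"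
  by (rule cls'[THEN conjunct2, THEN conjunct2, THEN conjunct2, THEN conjunct2, THEN conjunct1, rule_format])
lemma dl_hom: "P \<in> ob L \<Longrightarrow> x \<in> P \<Longrightarrow> dl P x \<in> homs L P P"
  using cls'[THEN conjunct2, THEN conjunct2, THEN conjunct2, THEN conjunct2, THEN conjunct2, THEN conjunct1] by blast
lemma dl_mult: "P \<in> ob L \<Longrightarrow> x \<in> P \<Longrightarrow> y \<in> P \<Longrightarrow> dl P (x \<otimes>\<^bsub>G\<^esub> y) = cmp L (dl P x) (dl P y)"
  by (rule cls'[THEN conjunct2, THEN conjunct2, THEN conjunct2, THEN conjunct2, THEN conjunct2, THEN conjunct2, THEN conjunct1, rule_format])
lemma dl_inj: "P \<in> ob L \<Longrightarrow> inj_on (dl P) P"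
  using cls'[THEN conjunct2, THEN conjunct2, THEN conjunct2, THEN conjunct2, THEN conjunct2, THEN conjunct2, THEN conjunct2, THEN conjunct1] by blast
lemma A_surj: "P \<in> ob L \<Longrightarrow> Q \<in> ob L \<Longrightarrow> prj ` homs L P Q = F P Q"
  using cls'[THEN conjunct2, THEN conjunct2, THEN conjunct2, THEN conjunct2, THEN conjunct2, THEN conjunct2, THEN conjunct2, THEN conjunct2, THEN conjunct1] by blast
lemma A_fib: "P \<in> ob L \<Longrightarrow> Q \<in> ob L \<Longrightarrow> f \<in> homs L P Q \<Longrightarrow> f' \<in> homs L P Q \<Longrightarrow>
    prj f = prj f' \<Longrightarrow> \<exists>z\<in>Cent G P \<inter> P. f' = cmp L f (dl P z)"
  by (rule cls'[THEN conjunct2, THEN conjunct2, THEN conjunct2, THEN conjunct2, THEN conjunct2, THEN conjunct2, THEN conjunct2, THEN conjunct2, THEN conjunct2, THEN conjunct1, rule_format, THEN iffD1])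
lemma A_free: "P \<in> ob L \<Longrightarrow> Q \<in> ob L \<Longrightarrow> f \<in> homs L P Q \<Longrightarrow> z \<in> Cent G P \<inter> P \<Longrightarrow>
        cmp L f (dl P z) = f \<Longrightarrow> z = \<one>\<^bsub>G\<^esub>"
  by (rule cls'[THEN conjunct2, THEN conjunct2, THEN conjunct2, THEN conjunct2, THEN conjunct2, THEN conjunct2, THEN conjunct2, THEN conjunct2, THEN conjunct2, THEN conjunct2, THEN conjunct1, rule_format])

lemma homsD: "f \<in> homs L U V \<Longrightarrow> f \<in> ar L \<and> sc L f = U \<and> tg L f = V"
  unfolding homs_def by blast
lemma cmpL: "f \<in> homs L U V \<Longrightarrow> g \<in> homs L V T \<Longrightarrow> cmp L g f \<in> homs L U T"
  by (rule catL[unfolded is_category_def, THEN conjunct2, THEN conjunct2, THEN conjunct1, rule_format])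
lemma assocL: "f \<in> homs L R U \<Longrightarrow> g \<in> homs L U V \<Longrightarrow> h \<in> homs L V T \<Longrightarrow>
        cmp L h (cmp L g f) = cmp L (cmp L h g) f"
proof -
  have X: "\<forall>R U V T f g h. f \<in> homs L R U \<longrightarrow> g \<in> homs L U V \<longrightarrow> h \<in> homs L V T \<longrightarrow>
        cmp L h (cmp L g f) = cmp L (cmp L h g) f" using catL unfolding is_category_def by (elim conjE)
  show "f \<in> homs L R U \<Longrightarrow> g \<in> homs L U V \<Longrightarrow> h \<in> homs L V T \<Longrightarrow>
        cmp L h (cmp L g f) = cmp L (cmp L h g) f" using X by metis
qed
lemma idlL: "f \<in> homs L U V \<Longrightarrow> cmp L (idt L V) f = f"
  using catL[unfolded is_category_def, THEN conjunct2, THEN conjunct2, THEN conjunct2, THEN conjunct2, rule_format, of f U V] by simp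
lemma idrL: "f \<in> homs L U V \<Longrightarrow> cmp L f (idt L U) = f"
  using catL[unfolded is_category_def, THEN conjunct2, THEN conjunct2, THEN conjunct2, THEN conjunct2, rule_format, of f U V] by simp
lemma idt_hom: "U \<in> ob L \<Longrightarrow> idt L U \<in> homs L U U"
  using catL[unfolded is_category_def, THEN conjunct2, THEN conjunct1] by blast
lemma homs_ob: "f \<in> homs L U V \<Longrightarrow> U \<in> ob L \<and> V \<in> ob L"
  using catL[unfolded is_category_def, THEN conjunct1] homsD by metis

lemma fs1: "F P Q \<noteq> {} \<Longrightarrow> subgroup P G \<and> subgroup Q G"
  using fs unfolding fusion_system_def by blast
lemma fs2: "subgroup P G \<Longrightarrow> subgroup Q G \<Longrightarrow> F P Q \<subseteq> InjHom G P Q"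
  using fs unfolding fusion_system_def by blast
lemma fs3: "\<phi> \<in> F P Q \<Longrightarrow> \<psi> \<in> F Q R \<Longrightarrow> restrict (\<psi> \<circ> \<phi>) P \<in> F P R"
  using fs unfolding fusion_system_def by blast
lemma fs4: "\<phi> \<in> F P Q \<Longrightarrow> \<phi> \<in> F P (\<phi> ` P) \<and> restrict (inv_into P \<phi>) (\<phi> ` P) \<in> F (\<phi> ` P) P"
  using fs unfolding fusion_system_def by blast

lemma F_inj: "\<phi> \<in> F P Q \<Longrightarrow> \<phi> \<in> InjHom G P Q"
  using fs1 fs2 by blast

lemma prj_inj: "f \<in> homs L P Q \<Longrightarrow> prj f \<in> extensional P \<and> prj f ` P \<subseteq> Q \<and> inj_on (prj f) P"
  using F_inj[OF prjF] unfolding InjHom_def by blast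

lemma ob_iff: "P \<in> ob L \<longleftrightarrow> F_centric G F P" using obL by simp

lemma ob_cent: "P \<in> ob L \<Longrightarrow> Fconj G F P Q \<Longrightarrow> Cent G Q \<subseteq> Q"
  unfolding ob_iff F_centric_def by blast

lemma ob_intro: "subgroup P G \<Longrightarrow> (\<And>Q. Fconj G F P Q \<Longrightarrow> Cent G Q \<subseteq> Q) \<Longrightarrow> P \<in> ob L"
  unfolding ob_iff F_centric_def by blast

lemma ob_sub: "P \<in> ob L \<Longrightarrow> subgroup P G"
  unfolding ob_iff F_centric_def by blast

lemma S_ob: "carrier G \<in> ob L"
proof -
  have "Cent G Q \<subseteq> Q" if FQ: "Fconj G F (carrier G) Q" for Q
  proof -
    obtain \<phi> where \<phi>: "\<phi> \<in> F (carrier G) (carrier G)" "Q = \<phi> ` carrier G"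
      using FQ unfolding Fconj_def by blast
    have "\<phi> ` carrier G \<subseteq> carrier G" "inj_on \<phi> (carrier G)"
      using F_inj[OF \<phi>(1)] unfolding InjHom_def by blast+
    then have "Q = carrier G" using \<phi>(2) fin by (simp add: endo_inj_surj)
    then show ?thesis unfolding Cent_def by blast
  qed
  then show ?thesis using grp group.subgroup_self ob_intro by blast
qed

lemma upper_ob:
  assumes P: "P \<in> ob L" and a: "\<alpha> \<in> homs L P (carrier G)"
  shows "prj \<alpha> ` P \<in> ob L"
proof -
  have f: "prj \<alpha> \<in> F P (carrier G)" using prjF a by blast
  then have f2: "prj \<alpha> \<in> F P (prj \<alpha> ` P)" using fs4 by blast
  then have sg: "subgroup (prj \<alpha> ` P) G" using fs1 by blast
  have "Cent G Q \<subseteq> Q" if FQ: "Fconj G F (prj \<alpha> ` P) Q" for Q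
  proof -
    obtain \<phi> where \<phi>: "\<phi> \<in> F (prj \<alpha> ` P) (carrier G)" "Q = \<phi> ` prj \<alpha> ` P"
      using FQ unfolding Fconj_def by blast
    have "restrict (\<phi> \<circ> prj \<alpha>) P \<in> F P (carrier G)" using fs3[OF f2 \<phi>(1)] .
    moreover have "restrict (\<phi> \<circ> prj \<alpha>) P ` P = Q" using \<phi>(2) by auto
    ultimately have "Fconj G F P Q" unfolding Fconj_def by metis
    then show ?thesis using P ob_cent by blast
  qed
  then show ?thesis using sg ob_intro by blast
qed

lemma dl_one:
  assumes P: "P \<in> ob L" shows "dl P \<one>\<^bsub>G\<^esub> = idt L P"
proof -
  have sg: "subgroup P G" using ob_sub P .
  have one: "\<one>\<^bsub>G\<^esub> \<in> P" using subgroup.one_closed[OF sg] .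
  have h1: "dl P \<one>\<^bsub>G\<^esub> \<in> homs L P P" using dl_hom P one by blast
  have "prj (dl P \<one>\<^bsub>G\<^esub>) = restrict (cj G \<one>\<^bsub>G\<^esub>) P"
    using cls'[THEN conjunct2, THEN conjunct2, THEN conjunct2, THEN conjunct2, THEN conjunct2, THEN conjunct2, THEN conjunct2, THEN conjunct2, THEN conjunct2, THEN conjunct2, THEN conjunct2, THEN conjunct1] P one by blast
  also have "\<dots> = restrict id P"
    using subgroup.mem_carrier[OF sg] grp
    by (auto simp: cj_def restrict_def fun_eq_iff group.is_monoid monoid.inv_one)
  also have "\<dots> = prj (idt L P)" using prj_id P by simp
  finally obtain z where z: "z \<in> Cent G P \<inter> P" "idt L P = cmp L (dl P \<one>\<^bsub>G\<^esub>) (dl P z)"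
    using A_fib[OF P P h1 idt_hom[OF P]] by blast
  have zc: "z \<in> carrier G" using z(1) subgroup.mem_carrier[OF sg] by blast
  have "dl P z = dl P (\<one>\<^bsub>G\<^esub> \<otimes>\<^bsub>G\<^esub> z)" using zc grp by (simp add: group.is_monoid)
  also have "\<dots> = idt L P" using dl_mult[OF P one] z by simp
  finally have dz: "dl P z = idt L P" .
  have "dl P (z \<otimes>\<^bsub>G\<^esub> z) = cmp L (idt L P) (idt L P)" using dl_mult[OF P] z(1) dz by simp
  also have "\<dots> = idt L P" using idlL idt_hom P by blast
  finally have "dl P (z \<otimes>\<^bsub>G\<^esub> z) = dl P z" using dz by simp
  then have "z \<otimes>\<^bsub>G\<^esub> z = z" using inj_onD[OF dl_inj[OF P]] z(1) subgroup.m_closed[OF sg] by blast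
  then have "z = \<one>\<^bsub>G\<^esub>" using group.l_cancel_one[OF grp zc zc] by simp
  then show ?thesis using dz by simp
qed


lemma ci_facts: "compatible_inclusions G L prj io \<Longrightarrow> P \<in> ob L \<Longrightarrow> Q \<in> ob L \<Longrightarrow> P \<subseteq> Q \<Longrightarrow>
   io P Q \<in> homs L P Q \<and> prj (io P Q) = restrict id P"
  unfolding compatible_inclusions_def by blast

lemma restr_props:
  assumes ci: "compatible_inclusions G L prj io" and P: "P \<in> ob L" and a: "\<alpha> \<in> homs L P (carrier G)"
  shows "upper L prj \<alpha> = prj \<alpha> ` P \<and> prj \<alpha> ` P \<in> ob L \<and>
    restr G L prj io \<alpha> \<in> homs L P (prj \<alpha> ` P) \<and>
    cmp L (io (prj \<alpha> ` P) (carrier G)) (restr G L prj io \<alpha>) = \<alpha> \<and>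
    prj (restr G L prj io \<alpha>) = prj \<alpha>"
proof -
  define Q where "Q = prj \<alpha> ` P"
  have sc: "sc L \<alpha> = P" using homsD[OF a] by simp
  have up: "upper L prj \<alpha> = Q" using sc unfolding upper_def Q_def by simp
  have Qob: "Q \<in> ob L" using upper_ob P a Q_def by simp
  have S: "carrier G \<in> ob L" by (rule S_ob)
  have QS: "Q \<subseteq> carrier G" using ob_sub[OF Qob] subgroup.subset by blast
  have io: "io Q (carrier G) \<in> homs L Q (carrier G)" "prj (io Q (carrier G)) = restrict id Q"
    using ci_facts[OF ci Qob S QS] by blast+
  have key: "prj (cmp L (io Q (carrier G)) \<beta>) = prj \<beta>" if b: "\<beta> \<in> homs L P Q" for \<beta>
  proof -
    have "prj (cmp L (io Q (carrier G)) \<beta>) = restrict (restrict id Q \<circ> prj \<beta>) P"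
      using prj_cmp[OF b io(1)] io(2) by simp
    also have "\<dots> = prj \<beta>" using prj_inj[OF b]
      by (auto simp: fun_eq_iff restrict_def extensional_def)
    finally show ?thesis .
  qed
  have "prj \<alpha> \<in> F P Q" using fs4[OF prjF[OF a]] Q_def by blast
  then obtain \<beta>' where b': "\<beta>' \<in> homs L P Q" "prj \<beta>' = prj \<alpha>"
    using A_surj[OF P Qob] by (metis imageE)
  have c1: "cmp L (io Q (carrier G)) \<beta>' \<in> homs L P (carrier G)" by (rule cmpL[OF b'(1) io(1)])
  obtain z where z: "z \<in> Cent G P \<inter> P" "\<alpha> = cmp L (cmp L (io Q (carrier G)) \<beta>') (dl P z)"
    using A_fib[OF P S c1 a] key[OF b'(1)] b'(2) by auto
  have dz: "dl P z \<in> homs L P P" using dl_hom P z by blast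
  define \<beta> where "\<beta> = cmp L \<beta>' (dl P z)"
  have b: "\<beta> \<in> homs L P Q" using cmpL[OF dz b'(1)] \<beta>_def by simp
  have eq: "cmp L (io Q (carrier G)) \<beta> = \<alpha>" using z(2) assocL[OF dz b'(1) io(1)] \<beta>_def by simp
  have uniq: "\<gamma> = \<beta>" if g: "\<gamma> \<in> homs L P Q" "cmp L (io Q (carrier G)) \<gamma> = \<alpha>" for \<gamma>
  proof -
    have "prj \<beta> = prj \<gamma>" using key[OF b] key[OF g(1)] eq g(2) by simp
    then obtain w where w: "w \<in> Cent G P \<inter> P" "\<gamma> = cmp L \<beta> (dl P w)"
      using A_fib[OF P Qob b g(1)] by blast
    have dw: "dl P w \<in> homs L P P" using dl_hom P w by blast
    have "cmp L (cmp L (io Q (carrier G)) \<beta>) (dl P w) = cmp L (io Q (carrier G)) \<beta>"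
      using assocL[OF dw b io(1)] w(2) g(2) eq by simp
    then have "w = \<one>\<^bsub>G\<^esub>" using A_free[OF P S cmpL[OF b io(1)] w(1)] by simp
    then show "\<gamma> = \<beta>" using w(2) dl_one[OF P] idrL[OF b] by simp
  qed
  have "restr G L prj io \<alpha> = \<beta>"
    unfolding restr_def sc up
    apply (rule the_equality)
    using b eq uniq by blast+
  moreover have "prj \<beta> = prj \<alpha>" using key[OF b] eq by simp
  ultimately show ?thesis using up Qob b eq Q_def by simp
qed

lemma right_inv:
  assumes P: "P \<in> ob L" and Q: "Q \<in> ob L" and b: "\<beta> \<in> homs L P Q" and surj: "prj \<beta> ` P = Q"
  shows "\<exists>\<gamma>\<in>homs L Q P. cmp L \<beta> \<gamma> = idt L Q"
proof -
  have F: "prj \<beta> \<in> F P Q" using prjF[OF b] .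
  have "restrict (inv_into P (prj \<beta>)) Q \<in> F Q P" using fs4[OF F] surj by simp
  then obtain \<gamma> where g: "\<gamma> \<in> homs L Q P" "prj \<gamma> = restrict (inv_into P (prj \<beta>)) Q"
    using A_surj[OF Q P] by (metis imageE)
  have "prj (cmp L \<beta> \<gamma>) = restrict (prj \<beta> \<circ> prj \<gamma>) Q" using prj_cmp[OF g(1) b] .
  also have "\<dots> = restrict id Q" using g(2) surj by (auto simp: fun_eq_iff restrict_def f_inv_into_f)
  also have "\<dots> = prj (idt L Q)" using prj_id[OF Q] by simp
  finally have pe: "prj (idt L Q) = prj (cmp L \<beta> \<gamma>)" by simp
  obtain z where z: "z \<in> Cent G Q \<inter> Q" "cmp L \<beta> \<gamma> = cmp L (idt L Q) (dl Q z)"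
    using A_fib[OF Q Q idt_hom[OF Q] cmpL[OF g(1) b] pe] by blast
  have sg: "subgroup Q G" using ob_sub[OF Q] .
  have zQ: "z \<in> Q" using z(1) by blast
  have zi: "inv\<^bsub>G\<^esub> z \<in> Q" using subgroup.m_inv_closed[OF sg zQ] .
  have zc: "z \<in> carrier G" using subgroup.mem_carrier[OF sg zQ] .
  have dz: "dl Q z \<in> homs L Q Q" using dl_hom[OF Q zQ] .
  have dzi: "dl Q (inv\<^bsub>G\<^esub> z) \<in> homs L Q Q" using dl_hom[OF Q zi] .
  have bg: "cmp L \<beta> \<gamma> = dl Q z" using z(2) idlL[OF dz] by simp
  have "cmp L \<beta> (cmp L \<gamma> (dl Q (inv\<^bsub>G\<^esub> z))) = cmp L (cmp L \<beta> \<gamma>) (dl Q (inv\<^bsub>G\<^esub> z))"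
    using assocL[OF dzi g(1) b] .
  also have "\<dots> = dl Q (z \<otimes>\<^bsub>G\<^esub> inv\<^bsub>G\<^esub> z)" using bg dl_mult[OF Q zQ zi] by simp
  also have "\<dots> = idt L Q" using group.r_inv[OF grp zc] dl_one[OF Q] by simp
  finally show ?thesis using cmpL[OF dzi g(1)] by blast
qed

lemma two_sided:
  assumes P: "P \<in> ob L" and Q: "Q \<in> ob L" and b: "\<beta> \<in> homs L P Q" and surj: "prj \<beta> ` P = Q"
  shows "\<exists>\<gamma>\<in>homs L Q P. cmp L \<beta> \<gamma> = idt L Q \<and> cmp L \<gamma> \<beta> = idt L P"
proof -
  obtain \<gamma> where g: "\<gamma> \<in> homs L Q P" "cmp L \<beta> \<gamma> = idt L Q" using right_inv[OF P Q b surj] by blast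
  have pg: "prj \<gamma> ` Q = P"
  proof
    show "prj \<gamma> ` Q \<subseteq> P" using prj_inj[OF g(1)] by blast
    show "P \<subseteq> prj \<gamma> ` Q"
    proof
      fix x assume x: "x \<in> P"
      define y where "y = prj \<beta> x"
      have y: "y \<in> Q" using x surj y_def by blast
      have "prj (cmp L \<beta> \<gamma>) y = prj (idt L Q) y" using g(2) by simp
      then have e: "prj \<beta> (prj \<gamma> y) = y" using prj_cmp[OF g(1) b] prj_id[OF Q] y by simp
      have gy: "prj \<gamma> y \<in> P" using prj_inj[OF g(1)] y by blast
      have "prj \<gamma> y = x" using inj_onD[OF conjunct2[OF conjunct2[OF prj_inj[OF b]]] _ gy x] e y_def by simp
      then show "x \<in> prj \<gamma> ` Q" using y by blast
    qed
  qed
  obtain \<delta> where d: "\<delta> \<in> homs L P Q" "cmp L \<gamma> \<delta> = idt L P" using right_inv[OF Q P g(1) pg] by blast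
  have "\<beta> = cmp L \<beta> (idt L P)" using idrL[OF b] by simp
  also have "\<dots> = cmp L (cmp L \<beta> \<gamma>) \<delta>" using d(2) assocL[OF d(1) g(1) b] by simp
  also have "\<dots> = \<delta>" using g(2) idlL[OF d(1)] by simp
  finally show ?thesis using g d by blast
qed

end

lemma homsD0: "f \<in> homs L U V \<Longrightarrow> f \<in> ar L \<and> sc L f = U \<and> tg L f = V"
  unfolding homs_def by blast

lemma homs_disc: "homs (discrete_cat Y) u v = (if u \<in> Y \<and> u = v then {u} else {})"
  unfolding homs_def discrete_cat_def by auto

lemma ob_disc: "ob (discrete_cat Y) = Y" unfolding discrete_cat_def by simp
lemma ar_disc: "ar (discrete_cat Y) = Y" unfolding discrete_cat_def by simp
lemma sc_disc: "sc (discrete_cat Y) u = u" unfolding discrete_cat_def by simp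
lemma tg_disc: "tg (discrete_cat Y) u = u" unfolding discrete_cat_def by simp
lemma cmp_disc: "cmp (discrete_cat Y) u v = v" unfolding discrete_cat_def by simp
lemma idt_disc: "idt (discrete_cat Y) u = u" unfolding discrete_cat_def by simp

lemma cat_disc: "is_category (discrete_cat Y)"
  unfolding is_category_def homs_def discrete_cat_def by auto

context
  fixes p :: nat and G :: "'g monoid" and F :: "'g set \<Rightarrow> 'g set \<Rightarrow> ('g \<Rightarrow> 'g) set"
    and L :: "('g set, 'm) cat" and prj :: "'m \<Rightarrow> 'g \<Rightarrow> 'g" and dl :: "'g set \<Rightarrow> 'g \<Rightarrow> 'm"
    and io :: "'g set \<Rightarrow> 'g set \<Rightarrow> 'm"
    and \<Gamma> :: "'x monoid" and \<Theta> :: "'m \<Rightarrow> 'x" and H :: "'x set" and P :: "'g set"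
  assumes cls: "centric_linking_system G F L prj dl"
    and fs: "fusion_system G F" and grp: "group G" and fin: "finite (carrier G)"
    and ci: "compatible_inclusions G L prj io"
    and th: "theta_setup p G L io \<Gamma> \<Theta>"
    and Hs: "subgroup H \<Gamma>"
    and P: "P \<in> ob L"
begin

lemmas th' = th[unfolded theta_setup_def]
lemma gG: "group \<Gamma>" using th'[THEN conjunct1] .
lemma thc: "f \<in> ar L \<Longrightarrow> \<Theta> f \<in> carrier \<Gamma>"
  using th'[THEN conjunct2, THEN conjunct2, THEN conjunct2, THEN conjunct1] by blast
lemma thmul: "f \<in> homs L P' Q \<Longrightarrow> g \<in> homs L Q R \<Longrightarrow> \<Theta> (cmp L g f) = \<Theta> g \<otimes>\<^bsub>\<Gamma>\<^esub> \<Theta> f"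
  by (rule th'[THEN conjunct2, THEN conjunct2, THEN conjunct2, THEN conjunct2, THEN conjunct1, rule_format])
lemma thid: "Q \<in> ob L \<Longrightarrow> \<Theta> (idt L Q) = \<one>\<^bsub>\<Gamma>\<^esub>"
  using th'[THEN conjunct2, THEN conjunct2, THEN conjunct2, THEN conjunct2, THEN conjunct2, THEN conjunct1] by blast
lemma thio: "Q \<in> ob L \<Longrightarrow> \<Theta> (io Q (carrier G)) = \<one>\<^bsub>\<Gamma>\<^esub>"
  using th'[THEN conjunct2, THEN conjunct2, THEN conjunct2, THEN conjunct2, THEN conjunct2, THEN conjunct2, THEN conjunct1] by blast
lemma thsurj: "\<Theta> ` homs L (carrier G) (carrier G) = carrier \<Gamma>"
  using th'[THEN conjunct2, THEN conjunct2, THEN conjunct2, THEN conjunct2, THEN conjunct2, THEN conjunct2, THEN conjunct2] .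

lemmas rp = restr_props[OF cls fs grp fin ci P]
lemmas cmpL' = cmpL[OF cls fs grp fin]
lemmas assocL' = assocL[OF cls fs grp fin]
lemmas idlL' = idlL[OF cls fs grp fin]
lemmas idrL' = idrL[OF cls fs grp fin]
lemmas idt_hom' = idt_hom[OF cls fs grp fin]
lemmas two_sided' = two_sided[OF cls fs grp fin]
lemmas homs_ob' = homs_ob[OF cls fs grp fin]

definition "Obs = {(upper L prj \<alpha>, restr G L prj io \<alpha>) | \<alpha>. \<alpha> \<in> homs L P (carrier G)}"

abbreviation "GH \<equiv> GH_cat G L prj io \<Theta> H P"

lemma obGH: "ob GH = Obs" by (simp add: GH_cat_def Let_def Obs_def)
lemma arGH: "ar GH = {(x, y, \<psi>) | x y \<psi>. x \<in> Obs \<and> y \<in> Obs \<and> \<psi> \<in> homs L (fst x) (fst y) \<and>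
                                \<Theta> \<psi> \<in> H \<and> cmp L \<psi> (snd x) = snd y}"
  by (simp add: GH_cat_def Let_def Obs_def)
lemma scGH: "sc GH (x, y, \<psi>) = x" by (simp add: GH_cat_def Let_def)
lemma tgGH: "tg GH (x, y, \<psi>) = y" by (simp add: GH_cat_def Let_def)
lemma cmpGH: "cmp GH (y', z, \<psi>') (x, y, \<psi>) = (x, z, cmp L \<psi>' \<psi>)" by (simp add: GH_cat_def Let_def)
lemma idtGH: "idt GH x = (x, x, idt L (fst x))" by (simp add: GH_cat_def Let_def)

lemma arGH_mem: "f \<in> ar GH \<longleftrightarrow> (\<exists>x y \<psi>. f = (x, y, \<psi>) \<and> x \<in> Obs \<and> y \<in> Obs \<and>
    \<psi> \<in> homs L (fst x) (fst y) \<and> \<Theta> \<psi> \<in> H \<and> cmp L \<psi> (snd x) = snd y)"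
  unfolding arGH by (simp only: mem_Collect_eq)

lemma homsGH: "f \<in> homs GH U V \<longleftrightarrow> (\<exists>\<psi>. f = (U, V, \<psi>) \<and> U \<in> Obs \<and> V \<in> Obs \<and>
    \<psi> \<in> homs L (fst U) (fst V) \<and> \<Theta> \<psi> \<in> H \<and> cmp L \<psi> (snd U) = snd V)"
proof
  assume h: "f \<in> homs GH U V"
  then have f: "f \<in> ar GH" "sc GH f = U" "tg GH f = V" unfolding homs_def by simp_all
  from f(1) obtain x y \<psi> where a: "f = (x, y, \<psi>)" "x \<in> Obs" "y \<in> Obs" "\<psi> \<in> homs L (fst x) (fst y)"
      "\<Theta> \<psi> \<in> H" "cmp L \<psi> (snd x) = snd y"
    unfolding arGH_mem by (elim exE conjE)
  have "x = U" "y = V" using a(1) f(2,3) scGH tgGH by simp_all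
  then show "\<exists>\<psi>. f = (U, V, \<psi>) \<and> U \<in> Obs \<and> V \<in> Obs \<and>
    \<psi> \<in> homs L (fst U) (fst V) \<and> \<Theta> \<psi> \<in> H \<and> cmp L \<psi> (snd U) = snd V"
    using a by (intro exI[of _ \<psi>]) simp
next
  assume "\<exists>\<psi>. f = (U, V, \<psi>) \<and> U \<in> Obs \<and> V \<in> Obs \<and>
    \<psi> \<in> homs L (fst U) (fst V) \<and> \<Theta> \<psi> \<in> H \<and> cmp L \<psi> (snd U) = snd V"
  then obtain \<psi> where a: "f = (U, V, \<psi>)" "U \<in> Obs" "V \<in> Obs" "\<psi> \<in> homs L (fst U) (fst V)"
      "\<Theta> \<psi> \<in> H" "cmp L \<psi> (snd U) = snd V" by (elim exE conjE)
  have "f \<in> ar GH" unfolding arGH_mem using a by (intro exI[of _ U] exI[of _ V] exI[of _ \<psi>]) simp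
  moreover have "sc GH f = U" "tg GH f = V" using a(1) scGH tgGH by simp_all
  ultimately show "f \<in> homs GH U V" unfolding homs_def by simp
qed

lemma Obs_props:
  assumes "x \<in> Obs"
  shows "\<exists>\<alpha>\<in>homs L P (carrier G). fst x = prj \<alpha> ` P \<and> fst x \<in> ob L \<and>
     snd x \<in> homs L P (fst x) \<and> prj (snd x) = prj \<alpha> \<and> \<Theta> (snd x) = \<Theta> \<alpha>"
proof -
  have "\<exists>\<alpha>. x = (upper L prj \<alpha>, restr G L prj io \<alpha>) \<and> \<alpha> \<in> homs L P (carrier G)"
    using assms unfolding Obs_def by (rule CollectD)
  then obtain \<alpha> where a: "\<alpha> \<in> homs L P (carrier G)" "x = (upper L prj \<alpha>, restr G L prj io \<alpha>)"
    by (elim exE conjE) (rule that)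
  note r = rp[OF a(1)]
  have Qob: "prj \<alpha> ` P \<in> ob L" using r by blast
  have rh: "restr G L prj io \<alpha> \<in> homs L P (prj \<alpha> ` P)" using r by blast
  have ioh: "io (prj \<alpha> ` P) (carrier G) \<in> homs L (prj \<alpha> ` P) (carrier G)"
    using ci_facts[OF cls fs grp fin ci Qob S_ob[OF cls fs grp fin]]
      subgroup.subset[OF ob_sub[OF cls fs grp fin Qob]] by blast
  have "\<Theta> \<alpha> = \<Theta> (cmp L (io (prj \<alpha> ` P) (carrier G)) (restr G L prj io \<alpha>))"
    using r[THEN conjunct2, THEN conjunct2, THEN conjunct2, THEN conjunct1] by simp
  also have "\<dots> = \<Theta> (io (prj \<alpha> ` P) (carrier G)) \<otimes>\<^bsub>\<Gamma>\<^esub> \<Theta> (restr G L prj io \<alpha>)"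
    using thmul[OF rh ioh] .
  also have "\<dots> = \<Theta> (restr G L prj io \<alpha>)"
  proof -
    have "\<Theta> (restr G L prj io \<alpha>) \<in> carrier \<Gamma>" using thc[OF conjunct1[OF homsD0[OF rh]]] .
    then show ?thesis using thio[OF Qob] monoid.l_one[OF group.is_monoid[OF gG]] by simp
  qed
  finally have "\<Theta> (restr G L prj io \<alpha>) = \<Theta> \<alpha>" by simp
  moreover have "fst x = prj \<alpha> ` P" "snd x = restr G L prj io \<alpha>"
    using a(2) r[THEN conjunct1] by simp_all
  moreover have "prj (restr G L prj io \<alpha>) = prj \<alpha>" using r by blast
  ultimately have e: "\<Theta> (restr G L prj io \<alpha>) = \<Theta> \<alpha>" "fst x = prj \<alpha> ` P" "snd x = restr G L prj io \<alpha>"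
     "prj (restr G L prj io \<alpha>) = prj \<alpha>" by blast+
  show ?thesis
    apply (rule bexI[of _ \<alpha>])
    using e Qob rh a(1) by simp_all
qed

lemma c1: "\<forall>f\<in>ar GH. sc GH f \<in> ob GH \<and> tg GH f \<in> ob GH"
proof
  fix f assume "f \<in> ar GH"
  then obtain x y \<psi> where "f = (x, y, \<psi>)" "x \<in> Obs" "y \<in> Obs" unfolding arGH_mem by blast
  then show "sc GH f \<in> ob GH \<and> tg GH f \<in> ob GH" using scGH tgGH obGH by simp
qed
lemma c2: "\<forall>U\<in>ob GH. idt GH U \<in> homs GH U U"
proof
  fix U assume U: "U \<in> ob GH"
  then have "U \<in> Obs" using obGH by simp
  note Uo = this
  have o: "fst U \<in> ob L" "snd U \<in> homs L P (fst U)" using Obs_props[OF Uo] by blast+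
  have "idt L (fst U) \<in> homs L (fst U) (fst U)" using idt_hom'[OF o(1)] .
  moreover have "\<Theta> (idt L (fst U)) \<in> H" using thid[OF o(1)] subgroup.one_closed[OF Hs] by simp
  moreover have "cmp L (idt L (fst U)) (snd U) = snd U" using idlL'[OF o(2)] .
  ultimately show "idt GH U \<in> homs GH U U"
    unfolding homsGH idtGH using Uo by blast
qed
lemma c3: "\<forall>U V T f g. f \<in> homs GH U V \<longrightarrow> g \<in> homs GH V T \<longrightarrow> cmp GH g f \<in> homs GH U T"
proof (intro allI impI)
  fix U V T f g assume f: "f \<in> homs GH U V" and g: "g \<in> homs GH V T"
  obtain \<psi> where p: "f = (U, V, \<psi>)" "U \<in> Obs" "V \<in> Obs" "\<psi> \<in> homs L (fst U) (fst V)"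
    "\<Theta> \<psi> \<in> H" "cmp L \<psi> (snd U) = snd V" using f unfolding homsGH by blast
  obtain \<psi>' where q: "g = (V, T, \<psi>')" "V \<in> Obs" "T \<in> Obs" "\<psi>' \<in> homs L (fst V) (fst T)"
    "\<Theta> \<psi>' \<in> H" "cmp L \<psi>' (snd V) = snd T" using g unfolding homsGH by blast
  have sU: "snd U \<in> homs L P (fst U)" using Obs_props[OF p(2)] by blast
  have "\<Theta> (cmp L \<psi>' \<psi>) \<in> H" using thmul[OF p(4) q(4)] p(5) q(5) subgroup.m_closed[OF Hs] by simp
  moreover have "cmp L (cmp L \<psi>' \<psi>) (snd U) = snd T"
    using assocL'[OF sU p(4) q(4)] p(6) q(6) by simp
  ultimately show "cmp GH g f \<in> homs GH U T"
    unfolding homsGH p(1) q(1) cmpGH using p(2) q(3) cmpL'[OF p(4) q(4)] by blast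
qed
lemma c4: "\<forall>R U V T f g h. f \<in> homs GH R U \<longrightarrow> g \<in> homs GH U V \<longrightarrow> h \<in> homs GH V T \<longrightarrow>
      cmp GH h (cmp GH g f) = cmp GH (cmp GH h g) f"
proof (intro allI impI)
  fix R U V T f g h assume f: "f \<in> homs GH R U" and g: "g \<in> homs GH U V" and h: "h \<in> homs GH V T"
  obtain a where a: "f = (R, U, a)" "a \<in> homs L (fst R) (fst U)" using f unfolding homsGH by blast
  obtain b where b: "g = (U, V, b)" "b \<in> homs L (fst U) (fst V)" using g unfolding homsGH by blast
  obtain c where c: "h = (V, T, c)" "c \<in> homs L (fst V) (fst T)" using h unfolding homsGH by blast
  show "cmp GH h (cmp GH g f) = cmp GH (cmp GH h g) f"
    using assocL'[OF a(2) b(2) c(2)] by (simp add: a(1) b(1) c(1) cmpGH)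
qed
lemma c5: "\<forall>U V f. f \<in> homs GH U V \<longrightarrow> cmp GH (idt GH V) f = f \<and> cmp GH f (idt GH U) = f"
proof (intro allI impI)
  fix U V f assume f: "f \<in> homs GH U V"
  obtain a where a: "f = (U, V, a)" "a \<in> homs L (fst U) (fst V)" using f unfolding homsGH by blast
  show "cmp GH (idt GH V) f = f \<and> cmp GH f (idt GH U) = f"
    using idlL'[OF a(2)] idrL'[OF a(2)] by (simp add: a(1) idtGH cmpGH)
qed
lemma catGH: "is_category GH"
  unfolding is_category_def by (intro conjI c1 c2 c3 c4 c5)


lemma theta_restr:
  assumes a: "\<alpha> \<in> homs L P (carrier G)"
  shows "\<Theta> (restr G L prj io \<alpha>) = \<Theta> \<alpha>"
proof -
  note r = rp[OF a]
  have Qob: "prj \<alpha> ` P \<in> ob L" using r by blast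
  have rh: "restr G L prj io \<alpha> \<in> homs L P (prj \<alpha> ` P)" using r by blast
  have ioh: "io (prj \<alpha> ` P) (carrier G) \<in> homs L (prj \<alpha> ` P) (carrier G)"
    using ci_facts[OF cls fs grp fin ci Qob S_ob[OF cls fs grp fin]]
      subgroup.subset[OF ob_sub[OF cls fs grp fin Qob]] by blast
  have "\<Theta> \<alpha> = \<Theta> (cmp L (io (prj \<alpha> ` P) (carrier G)) (restr G L prj io \<alpha>))"
    using r[THEN conjunct2, THEN conjunct2, THEN conjunct2, THEN conjunct1] by simp
  also have "\<dots> = \<Theta> (io (prj \<alpha> ` P) (carrier G)) \<otimes>\<^bsub>\<Gamma>\<^esub> \<Theta> (restr G L prj io \<alpha>)"
    using thmul[OF rh ioh] .
  also have "\<dots> = \<Theta> (restr G L prj io \<alpha>)"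
  proof -
    have "\<Theta> (restr G L prj io \<alpha>) \<in> carrier \<Gamma>" using thc[OF conjunct1[OF homsD0[OF rh]]] .
    then show ?thesis using thio[OF Qob] monoid.l_one[OF group.is_monoid[OF gG]] by simp
  qed
  finally show ?thesis by simp
qed

lemma Obs_facts:
  assumes U: "U \<in> Obs"
  shows "fst U \<in> ob L" "snd U \<in> homs L P (fst U)" "prj (snd U) ` P = fst U"
    "\<Theta> (snd U) \<in> carrier \<Gamma>"
proof -
  obtain \<alpha> where a: "\<alpha> \<in> homs L P (carrier G)" "fst U = prj \<alpha> ` P" "fst U \<in> ob L"
    "snd U \<in> homs L P (fst U)" "prj (snd U) = prj \<alpha>"
    using Obs_props[OF U] by blast
  show "fst U \<in> ob L" "snd U \<in> homs L P (fst U)" using a by blast+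
  show "prj (snd U) ` P = fst U" using a(2,5) by simp
  show "\<Theta> (snd U) \<in> carrier \<Gamma>" using thc[OF conjunct1[OF homsD0[OF a(4)]]] .
qed

lemma delta_in: "U \<in> Obs \<Longrightarrow> delta0 \<Gamma> \<Theta> H U \<in> coset_space \<Gamma> H"
  unfolding delta0_def coset_space_def
  using group.inv_closed[OF gG Obs_facts(4)] by blast

lemma homsGH_E:
  assumes "f \<in> homs GH U V"
  obtains \<psi> where "f = (U, V, \<psi>)" "U \<in> Obs" "V \<in> Obs" "\<psi> \<in> homs L (fst U) (fst V)"
      "\<Theta> \<psi> \<in> H" "cmp L \<psi> (snd U) = snd V"
  using assms unfolding homsGH by blast

lemma delta_eq:
  assumes f: "f \<in> homs GH U V"
  shows "delta0 \<Gamma> \<Theta> H U = delta0 \<Gamma> \<Theta> H V"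
proof -
  obtain \<psi> where p: "f = (U, V, \<psi>)" "U \<in> Obs" "V \<in> Obs" "\<psi> \<in> homs L (fst U) (fst V)"
      "\<Theta> \<psi> \<in> H" "cmp L \<psi> (snd U) = snd V" using homsGH_E[OF f] by blast
  have sU: "snd U \<in> homs L P (fst U)" using Obs_facts(2)[OF p(2)] .
  have ac: "\<Theta> (snd U) \<in> carrier \<Gamma>" using Obs_facts(4)[OF p(2)] .
  have tc: "\<Theta> \<psi> \<in> carrier \<Gamma>" using thc[OF conjunct1[OF homsD0[OF p(4)]]] .
  have "\<Theta> (snd V) = \<Theta> \<psi> \<otimes>\<^bsub>\<Gamma>\<^esub> \<Theta> (snd U)" using thmul[OF sU p(4)] p(6) by simp
  then have "inv\<^bsub>\<Gamma>\<^esub> (\<Theta> (snd V)) = inv\<^bsub>\<Gamma>\<^esub> (\<Theta> (snd U)) \<otimes>\<^bsub>\<Gamma>\<^esub> inv\<^bsub>\<Gamma>\<^esub> (\<Theta> \<psi>)"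
    using group.inv_mult_group[OF gG tc ac] by simp
  moreover have "(inv\<^bsub>\<Gamma>\<^esub> (\<Theta> (snd U)) \<otimes>\<^bsub>\<Gamma>\<^esub> inv\<^bsub>\<Gamma>\<^esub> (\<Theta> \<psi>)) <#\<^bsub>\<Gamma>\<^esub> H
      = inv\<^bsub>\<Gamma>\<^esub> (\<Theta> (snd U)) <#\<^bsub>\<Gamma>\<^esub> H"
    using lcos_absorb[OF gG Hs group.inv_closed[OF gG ac] subgroup.m_inv_closed[OF Hs p(5)]] .
  ultimately show ?thesis unfolding delta0_def by simp
qed

abbreviation "DD \<equiv> discrete_cat (coset_space \<Gamma> H)"

lemma delta1_val: "f \<in> homs GH U V \<Longrightarrow> delta1 \<Gamma> \<Theta> H f = delta0 \<Gamma> \<Theta> H U"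
  by (erule homsGH_E) (simp add: delta1_def)

lemma functorGH: "is_functor GH DD (delta0 \<Gamma> \<Theta> H) (delta1 \<Gamma> \<Theta> H)"
proof -
  have f1: "\<forall>U\<in>ob GH. delta0 \<Gamma> \<Theta> H U \<in> ob DD"
    by (simp add: delta_in obGH ob_disc)
  have f2: "\<forall>U V f. f \<in> homs GH U V \<longrightarrow> delta1 \<Gamma> \<Theta> H f \<in> homs DD (delta0 \<Gamma> \<Theta> H U) (delta0 \<Gamma> \<Theta> H V)"
  proof (intro allI impI)
    fix U V f assume f: "f \<in> homs GH U V"
    have "U \<in> Obs" using homsGH_E[OF f] by blast
    then show "delta1 \<Gamma> \<Theta> H f \<in> homs DD (delta0 \<Gamma> \<Theta> H U) (delta0 \<Gamma> \<Theta> H V)"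
      using delta1_val[OF f] delta_eq[OF f] delta_in[OF \<open>U \<in> Obs\<close>] by (simp add: homs_disc)
  qed
  have f3: "\<forall>U V T f g. f \<in> homs GH U V \<longrightarrow> g \<in> homs GH V T \<longrightarrow>
        delta1 \<Gamma> \<Theta> H (cmp GH g f) = cmp DD (delta1 \<Gamma> \<Theta> H g) (delta1 \<Gamma> \<Theta> H f)"
  proof (intro allI impI)
    fix U V T f g assume f: "f \<in> homs GH U V" and g: "g \<in> homs GH V T"
    obtain a where a: "f = (U, V, a)" using homsGH_E[OF f] by blast
    obtain b where b: "g = (V, T, b)" using homsGH_E[OF g] by blast
    show "delta1 \<Gamma> \<Theta> H (cmp GH g f) = cmp DD (delta1 \<Gamma> \<Theta> H g) (delta1 \<Gamma> \<Theta> H f)"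
      by (simp add: a b cmpGH cmp_disc delta1_def)
  qed
  have f4: "\<forall>U\<in>ob GH. delta1 \<Gamma> \<Theta> H (idt GH U) = idt DD (delta0 \<Gamma> \<Theta> H U)"
    by (simp add: idtGH idt_disc delta1_def)
  show ?thesis unfolding is_functor_def by (intro conjI f1 f2 f3 f4)
qed

lemma ffGH:
  assumes U: "U \<in> ob GH" and V: "V \<in> ob GH"
  shows "bij_betw (delta1 \<Gamma> \<Theta> H) (homs GH U V) (homs DD (delta0 \<Gamma> \<Theta> H U) (delta0 \<Gamma> \<Theta> H V))"
proof -
  have Uo: "U \<in> Obs" and Vo: "V \<in> Obs" using U V obGH by simp_all
  note fu = Obs_facts[OF Uo] and fv = Obs_facts[OF Vo]
  obtain \<gamma> where g: "\<gamma> \<in> homs L (fst U) P" "cmp L (snd U) \<gamma> = idt L (fst U)"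
      "cmp L \<gamma> (snd U) = idt L P"
    using two_sided'[OF P fu(1) fu(2) fu(3)] by blast
  have uniq: "f1 = f2" if f1: "f1 \<in> homs GH U V" and f2: "f2 \<in> homs GH U V" for f1 f2
  proof -
    have key: "\<psi> = cmp L (snd V) \<gamma>" if "\<psi> \<in> homs L (fst U) (fst V)" "cmp L \<psi> (snd U) = snd V" for \<psi>
    proof -
      have "\<psi> = cmp L \<psi> (idt L (fst U))" using idrL'[OF that(1)] by simp
      also have "\<dots> = cmp L (cmp L \<psi> (snd U)) \<gamma>" using g(2) assocL'[OF g(1) fu(2) that(1)] by simp
      finally show ?thesis using that(2) by simp
    qed
    obtain a where a: "f1 = (U, V, a)" "a \<in> homs L (fst U) (fst V)" "cmp L a (snd U) = snd V"
      using homsGH_E[OF f1] by blast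
    obtain b where b: "f2 = (U, V, b)" "b \<in> homs L (fst U) (fst V)" "cmp L b (snd U) = snd V"
      using homsGH_E[OF f2] by blast
    show ?thesis using key[OF a(2,3)] key[OF b(2,3)] a(1) b(1) by simp
  qed
  have inj: "inj_on (delta1 \<Gamma> \<Theta> H) (homs GH U V)" using uniq unfolding inj_on_def by blast
  show ?thesis
  proof (cases "delta0 \<Gamma> \<Theta> H U = delta0 \<Gamma> \<Theta> H V")
    case False
    then have "homs GH U V = {}" using delta_eq by blast
    then show ?thesis using False by (simp add: homs_disc bij_betw_def)
  next
    case True
    define \<psi> where "\<psi> = cmp L (snd V) \<gamma>"
    have ph: "\<psi> \<in> homs L (fst U) (fst V)" using cmpL'[OF g(1) fv(2)] \<psi>_def by simp
    have "cmp L \<psi> (snd U) = cmp L (snd V) (cmp L \<gamma> (snd U))"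
      using assocL'[OF fu(2) g(1) fv(2)] \<psi>_def by simp
    also have "\<dots> = snd V" using g(3) idrL'[OF fv(2)] by simp
    finally have pc: "cmp L \<psi> (snd U) = snd V" .
    define a where "a = \<Theta> (snd U)"
    define b where "b = \<Theta> (snd V)"
    have ac: "a \<in> carrier \<Gamma>" and bc: "b \<in> carrier \<Gamma>" using fu(4) fv(4) a_def b_def by simp_all
    have gc: "\<Theta> \<gamma> \<in> carrier \<Gamma>" using thc[OF conjunct1[OF homsD0[OF g(1)]]] .
    have "\<Theta> \<gamma> \<otimes>\<^bsub>\<Gamma>\<^esub> a = \<one>\<^bsub>\<Gamma>\<^esub>" using thmul[OF fu(2) g(1)] g(3) thid[OF P] a_def by simp
    then have ig: "inv\<^bsub>\<Gamma>\<^esub> a = \<Theta> \<gamma>" using group.inv_equality[OF gG _ ac gc] by simp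
    have tp: "\<Theta> \<psi> = b \<otimes>\<^bsub>\<Gamma>\<^esub> inv\<^bsub>\<Gamma>\<^esub> a" using thmul[OF g(1) fv(2)] \<psi>_def b_def ig by simp
    have "inv\<^bsub>\<Gamma>\<^esub> (inv\<^bsub>\<Gamma>\<^esub> a) \<otimes>\<^bsub>\<Gamma>\<^esub> inv\<^bsub>\<Gamma>\<^esub> b \<in> H"
      using lcos_eqD[OF gG Hs group.inv_closed[OF gG ac] group.inv_closed[OF gG bc]] True
      unfolding delta0_def a_def b_def by simp
    then have "a \<otimes>\<^bsub>\<Gamma>\<^esub> inv\<^bsub>\<Gamma>\<^esub> b \<in> H" using group.inv_inv[OF gG ac] by simp
    then have "inv\<^bsub>\<Gamma>\<^esub> (a \<otimes>\<^bsub>\<Gamma>\<^esub> inv\<^bsub>\<Gamma>\<^esub> b) \<in> H" using subgroup.m_inv_closed[OF Hs] by blast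
    moreover have "inv\<^bsub>\<Gamma>\<^esub> (a \<otimes>\<^bsub>\<Gamma>\<^esub> inv\<^bsub>\<Gamma>\<^esub> b) = b \<otimes>\<^bsub>\<Gamma>\<^esub> inv\<^bsub>\<Gamma>\<^esub> a"
      using group.inv_mult_group[OF gG ac group.inv_closed[OF gG bc]] group.inv_inv[OF gG bc] by simp
    ultimately have tH: "\<Theta> \<psi> \<in> H" using tp by simp
    have mem: "(U, V, \<psi>) \<in> homs GH U V" unfolding homsGH using Uo Vo ph tH pc by blast
    have "delta1 \<Gamma> \<Theta> H ` homs GH U V = {delta0 \<Gamma> \<Theta> H U}"
    proof
      show "delta1 \<Gamma> \<Theta> H ` homs GH U V \<subseteq> {delta0 \<Gamma> \<Theta> H U}" using delta1_val by blast
      show "{delta0 \<Gamma> \<Theta> H U} \<subseteq> delta1 \<Gamma> \<Theta> H ` homs GH U V"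
        using delta1_val[OF mem] mem by (metis empty_subsetI image_eqI insert_subset)
    qed
    moreover have "homs DD (delta0 \<Gamma> \<Theta> H U) (delta0 \<Gamma> \<Theta> H V) = {delta0 \<Gamma> \<Theta> H U}"
      using True delta_in[OF Uo] by (simp add: homs_disc)
    ultimately show ?thesis using inj unfolding bij_betw_def by simp
  qed
qed

lemma esGH: "essentially_surjective GH DD (delta0 \<Gamma> \<Theta> H)"
  unfolding essentially_surjective_def
proof
  fix V assume "V \<in> ob DD"
  then obtain g where g: "g \<in> carrier \<Gamma>" "V = g <#\<^bsub>\<Gamma>\<^esub> H"
    unfolding ob_disc coset_space_def by blast
  have "inv\<^bsub>\<Gamma>\<^esub> g \<in> \<Theta> ` homs L (carrier G) (carrier G)"
    using thsurj group.inv_closed[OF gG g(1)] by simp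
  then obtain \<alpha>0 where a0: "\<alpha>0 \<in> homs L (carrier G) (carrier G)" "\<Theta> \<alpha>0 = inv\<^bsub>\<Gamma>\<^esub> g" by (metis imageE)
  have S: "carrier G \<in> ob L" using S_ob[OF cls fs grp fin] .
  have ioP: "io P (carrier G) \<in> homs L P (carrier G)"
    using ci_facts[OF cls fs grp fin ci P S] subgroup.subset[OF ob_sub[OF cls fs grp fin P]] by blast
  define \<alpha> where "\<alpha> = cmp L \<alpha>0 (io P (carrier G))"
  have ah: "\<alpha> \<in> homs L P (carrier G)" using cmpL'[OF ioP a0(1)] \<alpha>_def by simp
  have "\<Theta> \<alpha> = inv\<^bsub>\<Gamma>\<^esub> g \<otimes>\<^bsub>\<Gamma>\<^esub> \<one>\<^bsub>\<Gamma>\<^esub>" using thmul[OF ioP a0(1)] thio[OF P] a0(2) \<alpha>_def by simp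
  then have ta: "\<Theta> \<alpha> = inv\<^bsub>\<Gamma>\<^esub> g"
    using monoid.r_one[OF group.is_monoid[OF gG] group.inv_closed[OF gG g(1)]] by simp
  define U where "U = (upper L prj \<alpha>, restr G L prj io \<alpha>)"
  have Uo: "U \<in> Obs" unfolding Obs_def U_def using ah by blast
  have "delta0 \<Gamma> \<Theta> H U = g <#\<^bsub>\<Gamma>\<^esub> H"
    unfolding delta0_def U_def using theta_restr[OF ah] ta group.inv_inv[OF gG g(1)] by simp
  then have "V \<in> homs DD (delta0 \<Gamma> \<Theta> H U) V" using g delta_in[OF Uo] by (simp add: homs_disc)
  moreover have "is_iso DD V"
    unfolding is_iso_def using delta_in[OF Uo] \<open>delta0 \<Gamma> \<Theta> H U = g <#\<^bsub>\<Gamma>\<^esub> H\<close> g(2)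
    by (simp add: ar_disc sc_disc tg_disc cmp_disc idt_disc homs_disc)
  moreover have "U \<in> ob GH" using Uo obGH by simp
  ultimately show "\<exists>U\<in>ob GH. \<exists>f\<in>homs DD (delta0 \<Gamma> \<Theta> H U) V. is_iso DD f" by blast
qed

lemma equivGH: "equivalence_of_categories GH DD (delta0 \<Gamma> \<Theta> H) (delta1 \<Gamma> \<Theta> H)"
  unfolding equivalence_of_categories_def fully_faithful_def
  using catGH cat_disc functorGH ffGH esGH by blast

end

theorem lemma3p11:
  fixes p :: nat and G :: "'g monoid" and F :: "'g set \<Rightarrow> 'g set \<Rightarrow> ('g \<Rightarrow> 'g) set"
    and L :: "('g set, 'm) cat" and prj :: "'m \<Rightarrow> 'g \<Rightarrow> 'g" and dl :: "'g set \<Rightarrow> 'g \<Rightarrow> 'm"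
    and io :: "'g set \<Rightarrow> 'g set \<Rightarrow> 'm"
    and \<Gamma> :: "'x monoid" and \<Theta> :: "'m \<Rightarrow> 'x" and H :: "'x set" and P :: "'g set"
  assumes "p_local_finite_group p G F L prj dl"
    and "compatible_inclusions G L prj io"
    and "theta_setup p G L io \<Gamma> \<Theta>"
    and "subgroup H \<Gamma>"
    and "P \<in> ob L"
  shows "equivalence_of_categories (GH_cat G L prj io \<Theta> H P) (discrete_cat (coset_space \<Gamma> H))
           (delta0 \<Gamma> \<Theta> H) (delta1 \<Gamma> \<Theta> H)"
proof -
  note pl = assms(1)[unfolded p_local_finite_group_def]
  have grp: "group G" using pl by blast
  have fin: "finite (carrier G)" using pl by blast
  have cls: "centric_linking_system G F L prj dl" using pl by blast
  have sfs: "saturated_fusion_system p G F" using pl by blast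
  have fs: "fusion_system G F" using sfs[unfolded saturated_fusion_system_def, THEN conjunct1] .
  show ?thesis using equivGH[OF cls fs grp fin assms(2) assms(3) assms(4) assms(5)] .
qed

end
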